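(* Let $d\ge2$. There exist positive constants $c^-=c^-(d)$ and $c^+=c^+(d)$ such that, for $\mathbf p=(p_1,\dots,p_d)$: (i) with high probability $\mathcal G(n,\mathbf p)$ is not topologically connected if $p_k\le\frac{c^-\log n}{n^k}$ for all $k\in[d]$; (ii) with high probability $\mathcal G(n,\mathbf p)$ is topologically connected if $p_k\ge\frac{c^+\log n}{n^k}$ for some $k\in[d]$.
   Context: $\mathcal G(n,\mathbf p)$: random simplicial complex on $[n]$ where for each $k\in[d]$ each $(k+1)$-subset of $[n]$ independently is an edge with probability $p_k\in[0,1]$; the complex consists of all singletons and all nonempty subsets of edges. Topologically connected means connected as a topological space (equivalently, the underlying hypergraph is vertex-connected). Whp = with probability tending to $1$ as $n\to\infty$. *)

theory Defs
  imports Complex_Main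
begin

definition kedges :: "nat \<Rightarrow> nat \<Rightarrow> nat set set" where
  "kedges n k = {e. e \<subseteq> {..<n} \<and> card e = k + 1}"

definition all_edges :: "nat \<Rightarrow> nat \<Rightarrow> nat set set" where
  "all_edges n d = (\<Union>k\<in>{1..d}. kedges n k)"

text \<open>Probability that the edge set of G(n,p) equals E (E a subset of all_edges n d):
  each (k+1)-set is independently an edge with probability p k.\<close>
definition edge_weight :: "nat \<Rightarrow> nat \<Rightarrow> (nat \<Rightarrow> real) \<Rightarrow> nat set set \<Rightarrow> real" where
  "edge_weight n d p E =
     (\<Prod>e\<in>all_edges n d. if e \<in> E then p (card e - 1) else 1 - p (card e - 1))"

text \<open>Two vertices are adjacent if they lie in a common edge; the complex (all singletons
  and all nonempty subsets of edges) is topologically connected iff the hypergraph on [n]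
  is vertex-connected.\<close>
definition hadj :: "nat set set \<Rightarrow> (nat \<times> nat) set" where
  "hadj E = {(u, v). \<exists>e\<in>E. u \<in> e \<and> v \<in> e}"

definition hconnected :: "nat \<Rightarrow> nat set set \<Rightarrow> bool" where
  "hconnected n E \<longleftrightarrow> (\<forall>u<n. \<forall>v<n. (u, v) \<in> (hadj E)\<^sup>*)"

definition prob_connected :: "nat \<Rightarrow> nat \<Rightarrow> (nat \<Rightarrow> real) \<Rightarrow> real" where
  "prob_connected n d p =
     (\<Sum>E\<in>Pow (all_edges n d). if hconnected n E then edge_weight n d p E else 0)"

end

theory Submission
  imports Defs "HOL-Real_Asymp.Real_Asymp"
begin


lemma finite_kedges: "finite (kedges n k)"
  unfolding kedges_def by (rule finite_subset[of _ "Pow {..<n}"]) auto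

lemma finite_all_edges: "finite (all_edges n d)"
  unfolding all_edges_def using finite_kedges by auto

lemma weight_split:
  assumes "E \<subseteq> all_edges n d"
  shows "edge_weight n d p E = (\<Prod>e\<in>E. p (card e - 1)) * (\<Prod>e\<in>all_edges n d - E. 1 - p (card e - 1))"
proof -
  have "edge_weight n d p E = (\<Prod>e\<in>all_edges n d \<inter> {x. x \<in> E}. p (card e - 1)) * (\<Prod>e\<in>all_edges n d \<inter> - {x. x \<in> E}. 1 - p (card e - 1))"
    unfolding edge_weight_def by (rule prod.If_cases[OF finite_all_edges])
  moreover have "all_edges n d \<inter> {x. x \<in> E} = E" using assms by auto
  moreover have "all_edges n d \<inter> - {x. x \<in> E} = all_edges n d - E" by auto
  ultimately show ?thesis by simp
qed

lemma avoid_prob: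
  assumes "B \<subseteq> all_edges n d"
  shows "(\<Sum>E\<in>Pow (all_edges n d). edge_weight n d p E * (if E \<inter> B = {} then 1 else 0))
         = (\<Prod>e\<in>B. 1 - p (card e - 1))"
proof -
  let ?A = "all_edges n d"
  define f1 where "f1 (e::nat set) = (if e \<in> B then 0 else p (card e - 1))" for e
  define f2 where "f2 (e::nat set) = 1 - p (card e - 1)" for e
  have "(\<Prod>e\<in>?A. f1 e + f2 e) = (\<Sum>X\<in>Pow ?A. (\<Prod>x\<in>X. f1 x) * (\<Prod>x\<in>?A-X. f2 x))"
    by (rule prod_add[OF finite_all_edges])
  moreover have "(\<Prod>e\<in>?A. f1 e + f2 e) = (\<Prod>e\<in>B. 1 - p (card e - 1))"
  proof -
    have "(\<Prod>e\<in>?A. f1 e + f2 e) = (\<Prod>e\<in>?A. if e \<in> B then 1 - p (card e - 1) else 1)"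
      by (rule prod.cong) (auto simp: f1_def f2_def)
    also have "\<dots> = (\<Prod>e\<in>?A \<inter> B. 1 - p (card e - 1))"
      by (simp add: prod.If_cases[OF finite_all_edges] Int_def)
    also have "?A \<inter> B = B" using assms by auto
    finally show ?thesis .
  qed
  moreover have "(\<Sum>X\<in>Pow ?A. (\<Prod>x\<in>X. f1 x) * (\<Prod>x\<in>?A-X. f2 x)) =
      (\<Sum>E\<in>Pow ?A. edge_weight n d p E * (if E \<inter> B = {} then 1 else 0))"
  proof (rule sum.cong[OF refl])
    fix X assume X: "X \<in> Pow ?A"
    show "(\<Prod>x\<in>X. f1 x) * (\<Prod>x\<in>?A-X. f2 x) = edge_weight n d p X * (if X \<inter> B = {} then 1 else 0)"
    proof (cases "X \<inter> B = {}")
      case True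
      then have "(\<Prod>x\<in>X. f1 x) = (\<Prod>x\<in>X. p (card x - 1))"
        by (intro prod.cong) (auto simp: f1_def)
      then show ?thesis using True X by (simp add: weight_split f2_def)
    next
      case False
      then obtain x where "x \<in> X" "x \<in> B" by auto
      moreover have "finite X" using X finite_all_edges[of n d] finite_subset by blast
      ultimately have "(\<Prod>x\<in>X. f1 x) = 0" by (auto simp: f1_def intro!: prod_zero)
      then show ?thesis using False by simp
    qed
  qed
  ultimately show ?thesis by simp
qed

lemma weight_nonneg:
  assumes "\<And>k. 0 \<le> p k \<and> p k \<le> 1"
  shows "edge_weight n d p E \<ge> 0"
  unfolding edge_weight_def using assms by (auto intro!: prod_nonneg)

lemma weight_sum1:
  "(\<Sum>E\<in>Pow (all_edges n d). edge_weight n d p E) = 1"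
  using avoid_prob[of "{}" n d p] by simp


lemma disconn_cut:
  assumes E: "E \<subseteq> all_edges n d" and nc: "\<not> hconnected n E"
  shows "\<exists>S. S \<subseteq> {..<n} \<and> S \<noteq> {} \<and> 2 * card S \<le> n \<and> (\<forall>e\<in>E. e \<subseteq> S \<or> e \<inter> S = {})"
proof -
  from nc obtain u v where uv: "u < n" "v < n" "(u, v) \<notin> (hadj E)\<^sup>*"
    unfolding hconnected_def by auto
  define C where "C = {w. w < n \<and> (u, w) \<in> (hadj E)\<^sup>*}"
  have esub: "e \<subseteq> {..<n}" if "e \<in> E" for e
    using E that unfolding all_edges_def kedges_def by auto
  have closed: "y \<in> C" if "e \<in> E" "x \<in> e" "x \<in> C" "y \<in> e" for e x y
  proof -
    have "(x, y) \<in> hadj E" unfolding hadj_def using that by auto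
    then have "(u, y) \<in> (hadj E)\<^sup>*" using that(3) unfolding C_def
      by (auto intro: rtrancl_into_rtrancl)
    then show ?thesis using esub[OF that(1)] that(4) unfolding C_def by auto
  qed
  have C1: "\<forall>e\<in>E. e \<subseteq> C \<or> e \<inter> C = {}"
    using closed by blast
  define D where "D = {..<n} - C"
  have D1: "\<forall>e\<in>E. e \<subseteq> D \<or> e \<inter> D = {}"
    using C1 esub unfolding D_def by blast
  have Cs: "C \<subseteq> {..<n}" "C \<noteq> {}" using uv unfolding C_def by auto
  have Ds: "D \<subseteq> {..<n}" "D \<noteq> {}" using uv unfolding C_def D_def by auto
  have "card C + card D = n"
    unfolding D_def using Cs card_Diff_subset[of C "{..<n}"] card_mono[of "{..<n}" C]
    by (simp add: finite_subset)
  then have "2 * card C \<le> n \<or> 2 * card D \<le> n" by linarith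
  then show ?thesis using Cs Ds C1 D1 by blast
qed

definition cross :: "nat \<Rightarrow> nat \<Rightarrow> nat set \<Rightarrow> nat set set" where
  "cross n k S = {e \<in> kedges n k. e \<inter> S \<noteq> {} \<and> \<not> e \<subseteq> S}"

lemma card_cross:
  assumes S: "S \<subseteq> {..<n}" and k: "k \<ge> 1"
  shows "card S * ((n - card S) choose k) \<le> card (cross n k S)"
proof -
  let ?T = "{T. T \<subseteq> {..<n} - S \<and> card T = k}"
  have finS: "finite S" using S finite_subset by blast
  have cT: "card ?T = (n - card S) choose k"
    using n_subsets[of "{..<n} - S" k] S finS by (simp add: card_Diff_subset)
  have inj: "inj_on (\<lambda>(v, T). insert v T) (S \<times> ?T)"
  proof (rule inj_onI, clarsimp)
    fix v T v' T'
    assume a: "v \<in> S" "T \<subseteq> {..<n} - S" "v' \<in> S" "T' \<subseteq> {..<n} - S" "insert v T = insert v' T'"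
    have "insert v T \<inter> S = {v}" "insert v' T' \<inter> S = {v'}" using a by auto
    then have "v = v'" using a(5) by auto
    moreover have "T = insert v T - S" "T' = insert v' T' - S" using a by auto
    ultimately show "v = v' \<and> T = T'" using a(5) by metis
  qed
  have sub: "(\<lambda>(v, T). insert v T) ` (S \<times> ?T) \<subseteq> cross n k S"
  proof
    fix x assume "x \<in> (\<lambda>(v, T). insert v T) ` (S \<times> ?T)"
    then obtain v T where a: "v \<in> S" "T \<subseteq> {..<n} - S" "card T = k" and xv: "x = insert v T" by auto
    have fT: "finite T" using a(2) finite_subset by blast
    have "T \<noteq> {}" using a(3) k by auto
    then have "\<not> insert v T \<subseteq> S" using a(2) by auto
    moreover have "card (insert v T) = k + 1"
    proof -
      have "v \<notin> T" using a by auto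
      then show ?thesis using a fT by auto
    qed
    moreover have "insert v T \<subseteq> {..<n}" using a S by auto
    ultimately show "x \<in> cross n k S" unfolding xv unfolding cross_def kedges_def using a by auto
  qed
  have "finite (cross n k S)" unfolding cross_def using finite_kedges by auto
  then have "card ((\<lambda>(v, T). insert v T) ` (S \<times> ?T)) \<le> card (cross n k S)"
    using sub card_mono by blast
  then show ?thesis using card_image[OF inj] cT by (simp add: card_cartesian_product)
qed

lemma sum_pow_card:
  assumes "finite A"
  shows "(\<Sum>S\<in>Pow A. (x::real) ^ card S) = (1 + x) ^ card A"
proof -
  have "(\<Prod>a\<in>A. x + 1) = (\<Sum>X\<in>Pow A. (\<Prod>a\<in>X. x) * (\<Prod>a\<in>A-X. 1))"
    by (rule prod_add[OF assms])
  then show ?thesis by (simp add: add.commute)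
qed


lemma one_minus_prob:
  "1 - prob_connected n d p = (\<Sum>E\<in>Pow (all_edges n d). edge_weight n d p E * (if hconnected n E then 0 else 1))"
proof -
  have "1 - prob_connected n d p = (\<Sum>E\<in>Pow (all_edges n d). edge_weight n d p E) - prob_connected n d p"
    by (simp add: weight_sum1)
  also have "\<dots> = (\<Sum>E\<in>Pow (all_edges n d). edge_weight n d p E - (if hconnected n E then edge_weight n d p E else 0))"
    unfolding prob_connected_def by (simp add: sum_subtractf)
  also have "\<dots> = (\<Sum>E\<in>Pow (all_edges n d). edge_weight n d p E * (if hconnected n E then 0 else 1))"
    by (rule sum.cong) auto
  finally show ?thesis .
qed

lemma key_ineq2:
  fixes n s k d :: nat and q :: real
  assumes k: "1 \<le> k" "k \<le> d" and n: "2 \<le> n" and s: "2 * s \<le> n" "2 * d \<le> n"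
    and q: "2 * (2 * real d) ^ d * ln (real n) / real n ^ k \<le> q"
  shows "2 * real s * ln (real n) \<le> q * (real s * real ((n - s) choose k))"
proof -
  have kn: "k \<le> n - s" using k s by linarith
  have "(real n / (2 * real k)) ^ k \<le> (real (n - s) / real k) ^ k"
  proof (rule power_mono)
    have "real n / 2 \<le> real (n - s)" using s by (simp add: of_nat_diff)
    then show "real n / (2 * real k) \<le> real (n - s) / real k"
      using k by (simp add: divide_simps)
  qed (use k in auto)
  also have "\<dots> \<le> real ((n - s) choose k)" by (rule binomial_ge_n_over_k_pow_k[OF kn])
  finally have C: "real n ^ k / (2 * real k) ^ k \<le> real ((n - s) choose k)"
    by (simp add: power_divide)
  have lnn: "0 \<le> ln (real n)" using n by simp
  have npos: "0 < real n ^ k" using n by simp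
  have dk: "(2 * real k) ^ k \<le> (2 * real d) ^ d"
  proof -
    have "(2 * real k) ^ k \<le> (2 * real d) ^ k" using k by (intro power_mono) auto
    also have "\<dots> \<le> (2 * real d) ^ d" using k by (intro power_increasing) auto
    finally show ?thesis .
  qed
  have kpos: "0 < (2 * real k) ^ k" using k by simp
  have "2 * ln (real n) \<le> 2 * (2 * real d) ^ d * ln (real n) / (2 * real k) ^ k"
    using dk kpos lnn by (simp add: field_simps mult_left_mono)
  also have "\<dots> = (2 * (2 * real d) ^ d * ln (real n) / real n ^ k) * (real n ^ k / (2 * real k) ^ k)"
    using npos by (simp add: field_simps)
  also have "\<dots> \<le> q * real ((n - s) choose k)"
  proof (rule mult_mono[OF q C])
    have "0 \<le> 2 * (2 * real d) ^ d * ln (real n) / real n ^ k" using lnn npos by simp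
    then show "0 \<le> q" using q by linarith
  qed (use npos kpos in simp)
  finally have "2 * ln (real n) \<le> q * real ((n - s) choose k)" .
  then have "real s * (2 * ln (real n)) \<le> real s * (q * real ((n - s) choose k))"
    by (intro mult_left_mono) auto
  then show ?thesis by (simp add: algebra_simps)
qed


lemma part2_bound:
  assumes p01: "\<forall>k. 0 \<le> p k \<and> p k \<le> 1" and k: "k \<in> {1..d}" and n: "2 * d \<le> n" "2 \<le> n"
    and pk: "2 * (2 * real d) ^ d * ln (real n) / real n ^ k \<le> p k"
  shows "1 - prob_connected n d p \<le> exp (1 / real n) - 1"
proof -
  let ?A = "all_edges n d"
  define SS where "SS = {S. S \<subseteq> {..<n} \<and> S \<noteq> {} \<and> 2 * card S \<le> n}"
  have finSS: "finite SS" unfolding SS_def by (rule finite_subset[of _ "Pow {..<n}"]) auto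
  have crossA: "cross n k S \<subseteq> ?A" for S
    using k unfolding cross_def all_edges_def by auto
  have ind: "(if hconnected n E then 0 else 1) \<le> (\<Sum>S\<in>SS. if E \<inter> cross n k S = {} then 1 else 0::real)"
    if E: "E \<in> Pow ?A" for E
  proof (cases "hconnected n E")
    case True
    then show ?thesis by (simp add: sum_nonneg)
  next
    case False
    then obtain S where S: "S \<subseteq> {..<n}" "S \<noteq> {}" "2 * card S \<le> n" "\<forall>e\<in>E. e \<subseteq> S \<or> e \<inter> S = {}"
      using disconn_cut[of E n d] E by auto
    have SSS: "S \<in> SS" using S unfolding SS_def by auto
    have "E \<inter> cross n k S = {}" using S(4) unfolding cross_def by auto
    then have "(1::real) \<le> (\<Sum>S\<in>SS. if E \<inter> cross n k S = {} then 1 else 0::real)"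
      using member_le_sum[OF SSS, of "\<lambda>S. if E \<inter> cross n k S = {} then 1 else 0::real"] finSS
      by auto
    then show ?thesis using False by simp
  qed
  have "1 - prob_connected n d p = (\<Sum>E\<in>Pow ?A. edge_weight n d p E * (if hconnected n E then 0 else 1))"
    by (rule one_minus_prob)
  also have "\<dots> \<le> (\<Sum>E\<in>Pow ?A. edge_weight n d p E * (\<Sum>S\<in>SS. if E \<inter> cross n k S = {} then 1 else 0))"
    by (intro sum_mono mult_left_mono ind weight_nonneg) (use p01 in auto)
  also have "\<dots> = (\<Sum>S\<in>SS. \<Sum>E\<in>Pow ?A. edge_weight n d p E * (if E \<inter> cross n k S = {} then 1 else 0))"
    by (simp add: sum_distrib_left sum.swap[of _ SS])
  also have "\<dots> = (\<Sum>S\<in>SS. \<Prod>e\<in>cross n k S. 1 - p (card e - 1))"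
    by (intro sum.cong refl avoid_prob crossA)
  also have "\<dots> = (\<Sum>S\<in>SS. (1 - p k) ^ card (cross n k S))"
  proof (intro sum.cong refl)
    fix S
    have "(\<Prod>e\<in>cross n k S. 1 - p (card e - 1)) = (\<Prod>e\<in>cross n k S. 1 - p k)"
      by (intro prod.cong refl) (auto simp: cross_def kedges_def)
    then show "(\<Prod>e\<in>cross n k S. 1 - p (card e - 1)) = (1 - p k) ^ card (cross n k S)" by simp
  qed
  also have "\<dots> \<le> (\<Sum>S\<in>SS. (1 / real n ^ 2) ^ card S)"
  proof (rule sum_mono)
    fix S assume "S \<in> SS"
    then have S: "S \<subseteq> {..<n}" "2 * card S \<le> n" unfolding SS_def by auto
    let ?s = "card S"
    have "(1 - p k) ^ card (cross n k S) \<le> exp (- p k) ^ card (cross n k S)"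
      using p01 by (intro power_mono) (auto simp: exp_minus_ge)
    also have "\<dots> = exp (- (p k * real (card (cross n k S))))"
      by (simp add: exp_of_nat_mult[symmetric] mult.commute)
    also have "\<dots> \<le> exp (- (p k * (real ?s * real ((n - ?s) choose k))))"
    proof -
      have "real ?s * real ((n - ?s) choose k) \<le> real (card (cross n k S))"
        using card_cross[OF S(1)] k by (simp flip: of_nat_mult)
      then have "p k * (real ?s * real ((n - ?s) choose k)) \<le> p k * real (card (cross n k S))"
        using p01 by (intro mult_left_mono) auto
      then show ?thesis by simp
    qed
    also have "\<dots> \<le> exp (- (2 * real ?s * ln (real n)))"
      using key_ineq2[of k d n ?s "p k"] k n S pk by auto
    also have "\<dots> = (1 / real n ^ 2) ^ ?s"
    proof -
      have "exp (- (2 * real ?s * ln (real n))) = exp (- 2 * ln (real n)) ^ ?s"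
        by (simp add: exp_of_nat_mult[symmetric] algebra_simps)
      also have "exp (- 2 * ln (real n)) = 1 / real n ^ 2"
        using n by (simp add: exp_minus exp_of_nat_mult[of 2, simplified] ln_powr inverse_eq_divide)
      finally show ?thesis .
    qed
    finally show "(1 - p k) ^ card (cross n k S) \<le> (1 / real n ^ 2) ^ ?s" .
  qed
  also have "\<dots> \<le> (\<Sum>S\<in>Pow {..<n} - {{}}. (1 / real n ^ 2) ^ card S)"
    by (intro sum_mono2) (auto simp: SS_def)
  also have "\<dots> = (1 + 1 / real n ^ 2) ^ n - 1"
    using sum_diff1[of "Pow {..<n}" "\<lambda>S. (1 / real n ^ 2) ^ card S" "{}"] sum_pow_card[of "{..<n}" "1 / real n ^ 2"]
    by simp
  also have "\<dots> \<le> exp (1 / real n ^ 2) ^ n - 1"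
    by (intro diff_right_mono power_mono) (auto simp: add.commute)
  also have "\<dots> = exp (1 / real n) - 1"
    using n by (simp add: exp_of_nat_mult[symmetric] power2_eq_square)
  finally show ?thesis .
qed


lemma sum_by_dim:
  assumes "F \<subseteq> all_edges n d"
  shows "(\<Sum>e\<in>F. p (card e - 1)) = (\<Sum>k\<in>{1..d}. real (card (F \<inter> kedges n k)) * (p k :: real))"
proof -
  have F: "F = (\<Union>k\<in>{1..d}. F \<inter> kedges n k)" using assms unfolding all_edges_def by auto
  have "(\<Sum>e\<in>F. p (card e - 1)) = (\<Sum>k\<in>{1..d}. \<Sum>e\<in>F \<inter> kedges n k. p (card e - 1))"
    apply (subst F)
    apply (rule sum.UNION_disjoint)
    using finite_kedges by (auto simp: kedges_def)
  also have "\<dots> = (\<Sum>k\<in>{1..d}. real (card (F \<inter> kedges n k)) * p k)"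
  proof (rule sum.cong[OF refl])
    fix k
    have "(\<Sum>e\<in>F \<inter> kedges n k. p (card e - 1)) = (\<Sum>e\<in>F \<inter> kedges n k. p k)"
      by (rule sum.cong) (auto simp: kedges_def)
    then show "(\<Sum>e\<in>F \<inter> kedges n k. p (card e - 1)) = real (card (F \<inter> kedges n k)) * p k" by simp
  qed
  finally show ?thesis .
qed

lemma card_star:
  "card ({e\<in>all_edges n d. v \<in> e} \<inter> kedges n k) \<le> n ^ k"
proof -
  let ?T = "{T. T \<subseteq> {..<n} \<and> card T = k}"
  have "{e\<in>all_edges n d. v \<in> e} \<inter> kedges n k \<subseteq> insert v ` ?T"
  proof
    fix e assume e: "e \<in> {e\<in>all_edges n d. v \<in> e} \<inter> kedges n k"
    then have "e = insert v (e - {v})" by auto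
    moreover have "e - {v} \<in> ?T" using e unfolding kedges_def
      by (auto simp: card_Diff_singleton_if finite_subset[of _ "{..<n}"])
    ultimately show "e \<in> insert v ` ?T" by blast
  qed
  then have "card ({e\<in>all_edges n d. v \<in> e} \<inter> kedges n k) \<le> card (insert v ` ?T)"
    by (intro card_mono) auto
  also have "\<dots> \<le> card ?T" by (rule card_image_le) auto
  also have "\<dots> = n choose k" using n_subsets[of "{..<n}" k] by simp
  also have "\<dots> \<le> n ^ k"
  proof (cases "k \<le> n")
    case True then show ?thesis by (rule binomial_le_pow)
  next
    case False then show ?thesis by (simp add: binomial_eq_0)
  qed
  finally show ?thesis .
qed

lemma card_star2:
  assumes "u \<noteq> v"
  shows "card ({e\<in>all_edges n d. u \<in> e} \<inter> {e\<in>all_edges n d. v \<in> e} \<inter> kedges n k) \<le> n ^ (k - 1)"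
proof -
  let ?T = "{T. T \<subseteq> {..<n} \<and> card T = k - 1}"
  have "{e\<in>all_edges n d. u \<in> e} \<inter> {e\<in>all_edges n d. v \<in> e} \<inter> kedges n k \<subseteq> (\<lambda>T. insert u (insert v T)) ` ?T"
  proof
    fix e assume e: "e \<in> {e\<in>all_edges n d. u \<in> e} \<inter> {e\<in>all_edges n d. v \<in> e} \<inter> kedges n k"
    then have "e = insert u (insert v (e - {u, v}))" by auto
    moreover have "e - {u, v} \<in> ?T"
    proof -
      have fe: "finite e" using e unfolding kedges_def by (auto simp: finite_subset[of _ "{..<n}"])
      have "card (e - {u, v}) = card e - card {u, v}" using e fe by (intro card_Diff_subset) auto
      then show ?thesis using e assms unfolding kedges_def by auto
    qed
    ultimately show "e \<in> (\<lambda>T. insert u (insert v T)) ` ?T" by blast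
  qed
  then have "card ({e\<in>all_edges n d. u \<in> e} \<inter> {e\<in>all_edges n d. v \<in> e} \<inter> kedges n k) \<le> card ((\<lambda>T. insert u (insert v T)) ` ?T)"
    by (intro card_mono) auto
  also have "\<dots> \<le> card ?T" by (rule card_image_le) auto
  also have "\<dots> = n choose (k - 1)" using n_subsets[of "{..<n}" "k - 1"] by simp
  also have "\<dots> \<le> n ^ (k - 1)"
  proof (cases "k - 1 \<le> n")
    case True then show ?thesis by (rule binomial_le_pow)
  next
    case False then show ?thesis by (simp add: binomial_eq_0)
  qed
  finally show ?thesis .
qed


lemma exp_le_one_minus:
  fixes a :: real assumes "0 \<le> a" "a \<le> 1/2"
  shows "exp (- 2 * a) \<le> 1 - a"
proof -
  have "- a - 2 * a\<^sup>2 \<le> ln (1 - a)" by (rule ln_one_minus_pos_lower_bound[OF assms])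
  moreover have "2 * a\<^sup>2 \<le> a" using assms by (simp add: power2_eq_square) (metis mult_left_mono mult.commute mult_1 order.trans le_divide_eq_numeral1(1) mult.assoc order_refl)
  ultimately have "- 2 * a \<le> ln (1 - a)" by linarith
  then have "exp (- 2 * a) \<le> exp (ln (1 - a))" by simp
  also have "\<dots> = 1 - a" using assms by simp
  finally show ?thesis .
qed

lemma prod_ge_exp:
  fixes f :: "'a \<Rightarrow> real"
  assumes "\<And>x. x \<in> F \<Longrightarrow> 0 \<le> f x \<and> f x \<le> 1/2"
  shows "exp (- 2 * sum f F) \<le> (\<Prod>x\<in>F. 1 - f x)"
proof (cases "finite F")
  case True
  have "exp (- 2 * sum f F) = (\<Prod>x\<in>F. exp (- 2 * f x))"
    using True by (simp add: exp_sum[symmetric] sum_distrib_left)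
  also have "\<dots> \<le> (\<Prod>x\<in>F. 1 - f x)"
    using assms exp_le_one_minus[of "f _"] by (intro prod_mono) auto
  finally show ?thesis .
next
  case False then show ?thesis by simp
qed




lemma conn_no_isolated:
  assumes "hconnected n E" "2 \<le> n" "v < n"
  shows "\<exists>e\<in>E. v \<in> e"
proof -
  obtain u where u: "u < n" "u \<noteq> v"
  proof (cases "v = 0")
    case True then show ?thesis using that[of 1] assms by auto
  next
    case False then show ?thesis using that[of 0] assms by auto
  qed
  then have "(v, u) \<in> (hadj E)\<^sup>*" using assms unfolding hconnected_def by auto
  then obtain w where "(v, w) \<in> hadj E" using u(2) by (cases rule: converse_rtranclE) auto
  then show ?thesis unfolding hadj_def by auto
qed

lemma my_weierstrass:
  fixes f :: "'a \<Rightarrow> real"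
  assumes "finite A" "\<And>x. x \<in> A \<Longrightarrow> 0 \<le> f x \<and> f x \<le> 1"
  shows "1 - sum f A \<le> (\<Prod>x\<in>A. 1 - f x)"
  using assms
proof (induction A rule: finite_induct)
  case empty then show ?case by simp
next
  case (insert x A)
  have IH: "1 - sum f A \<le> (\<Prod>x\<in>A. 1 - f x)" using insert by auto
  have fx: "0 \<le> f x" "f x \<le> 1" using insert by auto
  have P: "0 \<le> (\<Prod>x\<in>A. 1 - f x)" "(\<Prod>x\<in>A. 1 - f x) \<le> 1"
    using insert by (auto intro!: prod_nonneg prod_le_1)
  have "1 - sum f (insert x A) = (1 - sum f A) - f x" using insert by simp
  also have "\<dots> \<le> (\<Prod>x\<in>A. 1 - f x) - f x * (\<Prod>x\<in>A. 1 - f x)"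
    using IH fx P mult_left_mono[OF P(2) fx(1)] by linarith
  also have "\<dots> = (\<Prod>x\<in>insert x A. 1 - f x)" using insert by (simp add: algebra_simps)
  finally show ?case .
qed

lemma part1_bound:
  assumes p01: "\<forall>k. 0 \<le> p k \<and> p k \<le> 1" and d: "1 \<le> d" and n: "2 \<le> n"
    and pk: "\<forall>k\<in>{1..d}. p k \<le> 1 / (4 * real d) * ln (real n) / real n ^ k"
  shows "prob_connected n d p \<le> 1 / sqrt (real n) + ln (real n) / (2 * real n)"
proof -
  let ?A = "all_edges n d"
  define St where "St v = {e\<in>?A. v \<in> e}" for v
  define pe where "pe (e::nat set) = p (card e - 1)" for e
  define q where "q v = (\<Prod>e\<in>St v. 1 - pe e)" for v
  define \<mu> where "\<mu> = (\<Sum>v<n. q v)"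
  define X where "X E = (\<Sum>v<n. if E \<inter> St v = {} then 1 else 0::real)" for E
  define w where "w E = edge_weight n d p E" for E
  define \<delta> where "\<delta> = ln (real n) / (4 * real n)"
  have StA: "St v \<subseteq> ?A" for v unfolding St_def by auto
  have finSt: "finite (St v)" for v using StA finite_all_edges finite_subset by metis
  have npos: "0 < real n" using n by simp
  have lnn: "0 \<le> ln (real n)" using n by simp
  have lnle: "ln (real n) \<le> real n" using npos ln_le_minus_one[OF npos] by linarith
  have pkn: "p k * real n ^ k \<le> ln (real n) / (4 * real d)" if "k \<in> {1..d}" for k
    using pk that npos by (simp add: field_simps)
  have pe_small: "0 \<le> pe e \<and> pe e \<le> 1/2" if "e \<in> ?A" for e
  proof -
    from that obtain k where k: "k \<in> {1..d}" "card e = k + 1" unfolding all_edges_def kedges_def by auto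
    have "p k * real n \<le> p k * real n ^ k"
      using k p01 n by (intro mult_left_mono) (auto simp: self_le_power)
    also have "\<dots> \<le> ln (real n) / (4 * real d)" by (rule pkn[OF k(1)])
    also have "\<dots> \<le> ln (real n) / 4"
      by (rule divide_left_mono) (use lnn d in auto)
    also have "\<dots> \<le> 1/4 * real n" using lnle by simp
    finally have "p k * real n \<le> 1/4 * real n" .
    then have "p k \<le> 1/4" using npos by (simp only: mult_le_cancel_right_pos)
    then show ?thesis using k p01 unfolding pe_def by auto
  qed
  have \<delta>: "0 \<le> \<delta>" "\<delta> \<le> 1/4" unfolding \<delta>_def using lnn lnle npos by (auto simp: field_simps)
  have sumSt: "(\<Sum>e\<in>St v. pe e) \<le> ln (real n) / 4" for v
  proof -
    have "(\<Sum>e\<in>St v. pe e) = (\<Sum>k\<in>{1..d}. real (card (St v \<inter> kedges n k)) * p k)"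
      unfolding pe_def by (rule sum_by_dim[OF StA])
    also have "\<dots> \<le> (\<Sum>k\<in>{1..d}. ln (real n) / (4 * real d))"
    proof (rule sum_mono)
      fix k assume k: "k \<in> {1..d}"
      have "real (card (St v \<inter> kedges n k)) * p k \<le> real n ^ k * p k"
        using card_star[of n d v k] p01 unfolding St_def
        by (intro mult_right_mono) (auto simp flip: of_nat_power)
      also have "\<dots> \<le> ln (real n) / (4 * real d)" using pkn[OF k] by (simp add: mult.commute)
      finally show "real (card (St v \<inter> kedges n k)) * p k \<le> ln (real n) / (4 * real d)" .
    qed
    also have "\<dots> = ln (real n) / 4" using d by simp
    finally show ?thesis .
  qed
  have sumSt2: "(\<Sum>e\<in>St u \<inter> St v. pe e) \<le> \<delta>" if "u \<noteq> v" for u v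
  proof -
    have "(\<Sum>e\<in>St u \<inter> St v. pe e) = (\<Sum>k\<in>{1..d}. real (card (St u \<inter> St v \<inter> kedges n k)) * p k)"
      unfolding pe_def by (rule sum_by_dim) (use StA in auto)
    also have "\<dots> \<le> (\<Sum>k\<in>{1..d}. ln (real n) / (4 * real d) / real n)"
    proof (rule sum_mono)
      fix k assume k: "k \<in> {1..d}"
      have "real (card (St u \<inter> St v \<inter> kedges n k)) * p k \<le> real n ^ (k - 1) * p k"
        using card_star2[OF that, of n d k] p01 unfolding St_def
        by (intro mult_right_mono) (auto simp flip: of_nat_power)
      also have "\<dots> = p k * real n ^ k / real n"
        using k npos by (cases k) (auto simp: field_simps)
      also have "\<dots> \<le> ln (real n) / (4 * real d) / real n" by (rule divide_right_mono[OF pkn[OF k]]) (use npos in simp)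
      finally show "real (card (St u \<inter> St v \<inter> kedges n k)) * p k \<le> ln (real n) / (4 * real d) / real n" .
    qed
    also have "\<dots> = \<delta>" using d unfolding \<delta>_def by simp
    finally show ?thesis .
  qed
  have qlow: "1 / sqrt (real n) \<le> q v" for v
  proof -
    have "1 / sqrt (real n) = exp (- 2 * (ln (real n) / 4))"
      using npos by (simp add: powr_half_sqrt[symmetric] powr_def exp_minus inverse_eq_divide)
    also have "\<dots> \<le> exp (- 2 * (\<Sum>e\<in>St v. pe e))" using sumSt[of v] by simp
    also have "\<dots> \<le> q v" unfolding q_def by (rule prod_ge_exp) (use pe_small StA in blast)
    finally show ?thesis .
  qed
  have qnn: "0 \<le> q v" for v
  proof -
    have "0 \<le> 1 / sqrt (real n)" by simp
    then show ?thesis using qlow[of v] by linarith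
  qed
  have mulow: "sqrt (real n) \<le> \<mu>"
  proof -
    have "(\<Sum>v<n. 1 / sqrt (real n)) \<le> \<mu>" unfolding \<mu>_def by (intro sum_mono qlow)
    moreover have "(\<Sum>v<n. 1 / sqrt (real n)) = sqrt (real n)"
      using npos by (simp add: field_simps real_div_sqrt)
    ultimately show ?thesis by simp
  qed
  have mupos: "0 < \<mu>"
  proof -
    have "0 < sqrt (real n)" using npos by simp
    then show ?thesis using mulow by linarith
  qed
  have produv: "(\<Prod>e\<in>St u \<union> St v. 1 - pe e) \<le> (if u = v then q u else 0) + q u * q v / (1 - \<delta>)" for u v
  proof (cases "u = v")
    case True
    then show ?thesis using qnn[of u] \<delta> unfolding q_def by simp
  next
    case False
    have uv: "(\<Prod>e\<in>St u \<union> St v. 1 - pe e) * (\<Prod>e\<in>St u \<inter> St v. 1 - pe e) = q u * q v"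
      unfolding q_def by (rule prod.union_inter[OF finSt finSt])
    have "1 - \<delta> \<le> 1 - (\<Sum>e\<in>St u \<inter> St v. pe e)" using sumSt2[OF False] by simp
    also have "\<dots> \<le> (\<Prod>e\<in>St u \<inter> St v. 1 - pe e)"
      proof (rule my_weierstrass)
        show "finite (St u \<inter> St v)" using finSt by blast
        fix e assume "e \<in> St u \<inter> St v"
        then have "e \<in> ?A" using StA by blast
        then show "0 \<le> pe e \<and> pe e \<le> 1" using pe_small by fastforce
      qed
    finally have I: "1 - \<delta> \<le> (\<Prod>e\<in>St u \<inter> St v. 1 - pe e)" .
    have U: "0 \<le> (\<Prod>e\<in>St u \<union> St v. 1 - pe e)"
      using pe_small StA by (intro prod_nonneg) fastforce
    have "(\<Prod>e\<in>St u \<union> St v. 1 - pe e) * (1 - \<delta>) \<le> q u * q v"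
      using mult_left_mono[OF I U] uv by simp
    then show ?thesis using False \<delta> by (simp add: field_simps)
  qed
  have w_nn: "0 \<le> w E" for E unfolding w_def by (rule weight_nonneg) (use p01 in auto)
  have S1: "(\<Sum>E\<in>Pow ?A. w E) = 1" unfolding w_def by (rule weight_sum1)
  have SX: "(\<Sum>E\<in>Pow ?A. w E * X E) = \<mu>"
  proof -
    have "(\<Sum>E\<in>Pow ?A. w E * X E) = (\<Sum>v<n. \<Sum>E\<in>Pow ?A. w E * (if E \<inter> St v = {} then 1 else 0))"
      unfolding X_def by (simp add: sum_distrib_left sum.swap[of _ "{..<n}"])
    also have "\<dots> = \<mu>" unfolding \<mu>_def q_def pe_def w_def
      by (intro sum.cong refl avoid_prob) (auto simp: St_def)
    finally show ?thesis .
  qed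
  have SX2: "(\<Sum>E\<in>Pow ?A. w E * (X E)\<^sup>2) \<le> \<mu> + \<mu>\<^sup>2 / (1 - \<delta>)"
  proof -
    have X2: "(X E)\<^sup>2 = (\<Sum>u<n. \<Sum>v<n. if E \<inter> (St u \<union> St v) = {} then 1 else 0)" for E
      unfolding X_def power2_eq_square sum_product by (intro sum.cong refl) auto
    have "(\<Sum>E\<in>Pow ?A. w E * (X E)\<^sup>2) = (\<Sum>u<n. \<Sum>v<n. \<Sum>E\<in>Pow ?A. w E * (if E \<inter> (St u \<union> St v) = {} then 1 else 0))"
    proof -
      have "(\<Sum>E\<in>Pow ?A. w E * (X E)\<^sup>2) = (\<Sum>E\<in>Pow ?A. \<Sum>u<n. \<Sum>v<n. w E * (if E \<inter> (St u \<union> St v) = {} then 1 else 0))"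
        unfolding X2 by (simp only: sum_distrib_left)
      also have "\<dots> = (\<Sum>u<n. \<Sum>E\<in>Pow ?A. \<Sum>v<n. w E * (if E \<inter> (St u \<union> St v) = {} then 1 else 0))"
        by (rule sum.swap)
      also have "\<dots> = (\<Sum>u<n. \<Sum>v<n. \<Sum>E\<in>Pow ?A. w E * (if E \<inter> (St u \<union> St v) = {} then 1 else 0))"
        by (intro sum.cong refl sum.swap)
      finally show ?thesis .
    qed
    also have "\<dots> = (\<Sum>u<n. \<Sum>v<n. \<Prod>e\<in>St u \<union> St v. 1 - pe e)"
      unfolding pe_def w_def by (intro sum.cong refl avoid_prob) (auto simp: St_def)
    also have "\<dots> \<le> (\<Sum>u<n. \<Sum>v<n. (if u = v then q u else 0) + q u * q v / (1 - \<delta>))"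
      by (intro sum_mono produv)
    also have "\<dots> = \<mu> + \<mu>\<^sup>2 / (1 - \<delta>)"
      unfolding \<mu>_def by (simp add: sum.distrib power2_eq_square sum_product sum_divide_distrib)
    finally show ?thesis .
  qed
  have "prob_connected n d p \<le> (\<Sum>E\<in>Pow ?A. w E * (if X E = 0 then 1 else 0))"
    unfolding prob_connected_def
  proof (rule sum_mono)
    fix E assume E: "E \<in> Pow ?A"
    show "(if hconnected n E then edge_weight n d p E else 0) \<le> w E * (if X E = 0 then 1 else 0)"
    proof (cases "hconnected n E")
      case True
      have "X E = 0" unfolding X_def
      proof (intro sum.neutral ballI)
        fix v assume "v \<in> {..<n}"
        then obtain e where "e \<in> E" "v \<in> e" using conn_no_isolated[OF True n] by auto
        moreover have "e \<in> ?A" using E \<open>e \<in> E\<close> by auto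
        ultimately show "(if E \<inter> St v = {} then 1 else 0) = 0" unfolding St_def by auto
      qed
      then show ?thesis using True w_def by simp
    qed (simp add: w_nn)
  qed
  also have "\<dots> \<le> (\<Sum>E\<in>Pow ?A. w E * ((X E - \<mu>)\<^sup>2 / \<mu>\<^sup>2))"
  proof (intro sum_mono mult_left_mono w_nn)
    fix E show "(if X E = 0 then 1 else 0) \<le> (X E - \<mu>)\<^sup>2 / \<mu>\<^sup>2" using mupos by auto
  qed
  also have "\<dots> = ((\<Sum>E\<in>Pow ?A. w E * (X E)\<^sup>2) - 2 * \<mu> * (\<Sum>E\<in>Pow ?A. w E * X E) + \<mu>\<^sup>2 * (\<Sum>E\<in>Pow ?A. w E)) / \<mu>\<^sup>2"
    by (simp add: sum_divide_distrib[symmetric] sum_distrib_left sum_subtractf sum.distrib power2_eq_square algebra_simps)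
  also have "\<dots> \<le> (\<mu> + \<mu>\<^sup>2 / (1 - \<delta>) - \<mu>\<^sup>2) / \<mu>\<^sup>2"
    using SX2 mupos unfolding SX S1 by (intro divide_right_mono) (auto simp: power2_eq_square)
  also have "\<dots> = 1 / \<mu> + \<delta> / (1 - \<delta>)"
    using mupos \<delta> by (simp add: field_simps power2_eq_square)
  also have "\<dots> \<le> 1 / sqrt (real n) + 2 * \<delta>"
  proof (rule add_mono)
    show "1 / \<mu> \<le> 1 / sqrt (real n)" using mulow npos mupos by (intro divide_left_mono) auto
    have "\<delta> * (\<delta> * 2) \<le> \<delta> * 1" by (rule mult_left_mono) (use \<delta> in auto)
    then show "\<delta> / (1 - \<delta>) \<le> 2 * \<delta>" using \<delta> by (simp add: field_simps)
  qed
  also have "\<dots> = 1 / sqrt (real n) + ln (real n) / (2 * real n)" unfolding \<delta>_def by simp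
  finally show ?thesis .
qed


lemma prob_nonneg:
  assumes "\<forall>k. 0 \<le> p k \<and> p k \<le> 1"
  shows "0 \<le> prob_connected n d p"
  unfolding prob_connected_def using weight_nonneg[of p] assms by (intro sum_nonneg) auto

lemma prob_le1:
  assumes "\<forall>k. 0 \<le> p k \<and> p k \<le> 1"
  shows "prob_connected n d p \<le> 1"
proof -
  have "prob_connected n d p \<le> (\<Sum>E\<in>Pow (all_edges n d). edge_weight n d p E)"
    unfolding prob_connected_def using weight_nonneg[of p] assms by (intro sum_mono) auto
  then show ?thesis using weight_sum1 by simp
qed

theorem lemma3p2:
  fixes d :: nat
  assumes "d \<ge> 2"
  shows "\<exists>cm cp :: real. cm > 0 \<and> cp > 0 \<and>
    (\<forall>p :: nat \<Rightarrow> nat \<Rightarrow> real.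
       (\<forall>n k. 0 \<le> p n k \<and> p n k \<le> 1) \<longrightarrow>
       ((\<forall>\<^sub>F n in sequentially. \<forall>k\<in>{1..d}. p n k \<le> cm * ln (real n) / real n ^ k)
          \<longrightarrow> ((\<lambda>n. prob_connected n d (p n)) \<longlonglongrightarrow> 0)) \<and>
       ((\<forall>\<^sub>F n in sequentially. \<exists>k\<in>{1..d}. p n k \<ge> cp * ln (real n) / real n ^ k)
          \<longrightarrow> ((\<lambda>n. prob_connected n d (p n)) \<longlonglongrightarrow> 1)))"
proof (intro exI conjI allI impI)
  show "0 < 1 / (4 * real d)" using assms by simp
  show "0 < 2 * (2 * real d) ^ d" using assms by simp
next
  fix p :: "nat \<Rightarrow> nat \<Rightarrow> real"
  assume p01: "\<forall>n k. 0 \<le> p n k \<and> p n k \<le> 1"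
  {
    assume ev: "\<forall>\<^sub>F n in sequentially. \<forall>k\<in>{1..d}. p n k \<le> 1 / (4 * real d) * ln (real n) / real n ^ k"
    have up: "\<forall>\<^sub>F n in sequentially. prob_connected n d (p n) \<le> 1 / sqrt (real n) + ln (real n) / (2 * real n)"
      using ev eventually_ge_at_top[of 2]
    proof eventually_elim
      case (elim n)
      then show ?case using part1_bound[of "p n" d n] p01 assms by auto
    qed
    have lo: "\<forall>\<^sub>F n in sequentially. 0 \<le> prob_connected n d (p n)"
      using p01 prob_nonneg by auto
    have lim: "(\<lambda>n. 1 / sqrt (real n) + ln (real n) / (2 * real n)) \<longlonglongrightarrow> 0"
      by real_asymp
    show "(\<lambda>n. prob_connected n d (p n)) \<longlonglongrightarrow> 0"
      by (rule tendsto_sandwich[OF lo up tendsto_const lim])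
  }
  {
    assume ev: "\<forall>\<^sub>F n in sequentially. \<exists>k\<in>{1..d}. 2 * (2 * real d) ^ d * ln (real n) / real n ^ k \<le> p n k"
    have up: "\<forall>\<^sub>F n in sequentially. 1 - prob_connected n d (p n) \<le> exp (1 / real n) - 1"
      using ev eventually_ge_at_top[of "2 * d"] eventually_ge_at_top[of 2]
    proof eventually_elim
      case (elim n)
      then obtain k where "k \<in> {1..d}" "2 * (2 * real d) ^ d * ln (real n) / real n ^ k \<le> p n k" by auto
      then show ?case using part2_bound[of "p n" k d n] p01 elim by auto
    qed
    have lo: "\<forall>\<^sub>F n in sequentially. 0 \<le> 1 - prob_connected n d (p n)"
      using p01 prob_le1 by auto
    have lim: "(\<lambda>n. exp (1 / real n) - 1) \<longlonglongrightarrow> 0"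
      by real_asymp
    have "(\<lambda>n. 1 - prob_connected n d (p n)) \<longlonglongrightarrow> 0"
      by (rule tendsto_sandwich[OF lo up tendsto_const lim])
    then have "(\<lambda>n. 1 - (1 - prob_connected n d (p n))) \<longlonglongrightarrow> 1 - 0"
      by (intro tendsto_diff tendsto_const)
    then show "(\<lambda>n. prob_connected n d (p n)) \<longlonglongrightarrow> 1" by simp
  }
qed

end
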